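(* Let $P$ be a Coxeter polytope with facet set $S$ and let $T_1,T_2\subset S$ be disjoint. If $T_1\cup T_2$ defines a face of $P$ and $T_1\subset T_2^\perp$, then each of $T_1\cup T_2^0$, $T_1\cup T_2^0\cup T_2^+$ and $T_1\cup T_2^0\cup T_2^-$ also defines a face of $P$.
   Context: A Cartan matrix on a finite set $S$: $A_{ss}=2$, $A_{st}\le0$ ($s\neq t$), $A_{st}=0\iff A_{ts}=0$, and $A_{st}A_{ts}\ge4$ or $=4\cos^2(\pi/k)$ for an integer $k\ge2$. A Coxeter polytope is a projective polytope $P\subset\mathbb{P}(V)$ with facet set $S$ and pairs $(\alpha_s,v_s)\in V^*\times V$ such that $A=A_P=(\alpha_s(v_t))_{s,t\in S}$ is a Cartan matrix and $\bigcap_s\{\alpha_s\le0\}$ is a cone lifting $P$. For $T\subset S$, $A_T=(A_{st})_{s,t\in T}$; the irreducible components of $T$ are the connected components of the graph on $T$ with edges $\{s,t\}$ where $A_{st}\neq0$. An irreducible Cartan matrix is of positive/zero/negative type according to the sign of its Perron–Frobenius eigenvalue (the simple real eigenvalue maximizing $|2-\mu|$ over eigenvalues $\mu$). $T^+$, $T^0$, $T^-$ denote the unions of the irreducible components of $T$ whose Cartan submatrices are of positive, zero, negative type respectively. $T^\perp=\{s\in S: A_{st}=0\ \text{for all } t\in T\}$. A subset $S'\subset S$ defines a face of $P$ if there exists $x\in V$ with $\alpha_s(x)=0$ for $s\in S'$ and $\alpha_s(x)<0$ for $s\notin S'$ (equivalently, $S'=S_f=\{s:f\subset\mathbb{P}(\ker\alpha_s)\}$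 for some face $f$, possibly empty or $\mathrm{Int}P$). *)

theory Defs
  imports "HOL-Analysis.Analysis"
begin

text \<open>Matrices indexed by the facet set are functions 's => 's => real;
  the Cartan submatrix A_T is A restricted to T x T.\<close>

definition cartan_matrix :: "'s set \<Rightarrow> ('s \<Rightarrow> 's \<Rightarrow> real) \<Rightarrow> bool" where
  "cartan_matrix S A \<longleftrightarrow>
     (\<forall>s\<in>S. A s s = 2) \<and>
     (\<forall>s\<in>S. \<forall>t\<in>S. s \<noteq> t \<longrightarrow> A s t \<le> 0) \<and>
     (\<forall>s\<in>S. \<forall>t\<in>S. A s t = 0 \<longleftrightarrow> A t s = 0) \<and>
     (\<forall>s\<in>S. \<forall>t\<in>S. s \<noteq> t \<longrightarrow>
        (A s t * A t s \<ge> 4 \<or> (\<exists>k::nat. k \<ge> 2 \<and> A s t * A t s = 4 * (cos (pi / real k))\<^sup>2)))"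

definition lift_cone :: "'s set \<Rightarrow> ('s \<Rightarrow> 'v \<Rightarrow> real) \<Rightarrow> 'v set" where
  "lift_cone S \<alpha> = {x. \<forall>s\<in>S. \<alpha> s x \<le> 0}"

definition cartan_of :: "('s \<Rightarrow> 'v \<Rightarrow> real) \<Rightarrow> ('s \<Rightarrow> 'v) \<Rightarrow> 's \<Rightarrow> 's \<Rightarrow> real" where
  "cartan_of \<alpha> v = (\<lambda>s t. \<alpha> s (v t))"

text \<open>Coxeter polytope in P(V), V a finite-dimensional real vector space, given by
  its lifting cone: the cone {alpha_s <= 0} is closed, convex, pointed (properly convex),
  has nonempty interior (so projects to a projective polytope P), and each s in S
  gives a distinct facet (the defining inequalities are irredundant).\<close>
definition coxeter_polytope ::
  "'s set \<Rightarrow> ('s \<Rightarrow> 'v::euclidean_space \<Rightarrow> real) \<Rightarrow> ('s \<Rightarrow> 'v) \<Rightarrow> bool" where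
  "coxeter_polytope S \<alpha> v \<longleftrightarrow>
     finite S \<and> S \<noteq> {} \<and>
     (\<forall>s\<in>S. linear (\<alpha> s)) \<and>
     cartan_matrix S (cartan_of \<alpha> v) \<and>
     interior (lift_cone S \<alpha>) \<noteq> {} \<and>
     lift_cone S \<alpha> \<inter> uminus ` lift_cone S \<alpha> = {0} \<and>
     (\<forall>s\<in>S. \<exists>x\<in>lift_cone S \<alpha>. \<alpha> s x = 0 \<and> (\<forall>t\<in>S - {s}. \<alpha> t x < 0))"

definition defines_face :: "'s set \<Rightarrow> ('s \<Rightarrow> 'v \<Rightarrow> real) \<Rightarrow> 's set \<Rightarrow> bool" where
  "defines_face S \<alpha> S' \<longleftrightarrow> S' \<subseteq> S \<and>
     (\<exists>x. (\<forall>s\<in>S'. \<alpha> s x = 0) \<and> (\<forall>s\<in>S - S'. \<alpha> s x < 0))"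

definition eigenvalue_on :: "('s \<Rightarrow> 's \<Rightarrow> real) \<Rightarrow> 's set \<Rightarrow> complex \<Rightarrow> bool" where
  "eigenvalue_on A C \<mu> \<longleftrightarrow>
     (\<exists>z::'s \<Rightarrow> complex. (\<exists>t\<in>C. z t \<noteq> 0) \<and>
        (\<forall>s\<in>C. (\<Sum>t\<in>C. complex_of_real (A s t) * z t) = \<mu> * z s))"

text \<open>Perron-Frobenius eigenvalue of an irreducible Cartan matrix A_C: 2 - rho, where
  rho = max |2 - mu| over eigenvalues mu (the Perron-Frobenius eigenvalue of 2I - A_C).\<close>
definition pf_eigenvalue :: "('s \<Rightarrow> 's \<Rightarrow> real) \<Rightarrow> 's set \<Rightarrow> real" where
  "pf_eigenvalue A C = 2 - Sup {cmod (2 - \<mu>) | \<mu>. eigenvalue_on A C \<mu>}"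

definition cartan_edges :: "('s \<Rightarrow> 's \<Rightarrow> real) \<Rightarrow> 's set \<Rightarrow> ('s \<times> 's) set" where
  "cartan_edges A T = {(s, t). s \<in> T \<and> t \<in> T \<and> (A s t \<noteq> 0 \<or> A t s \<noteq> 0)}"

definition irr_components :: "('s \<Rightarrow> 's \<Rightarrow> real) \<Rightarrow> 's set \<Rightarrow> 's set set" where
  "irr_components A T = (\<lambda>s. {t. (s, t) \<in> (cartan_edges A T)\<^sup>*}) ` T"

definition pos_part :: "('s \<Rightarrow> 's \<Rightarrow> real) \<Rightarrow> 's set \<Rightarrow> 's set" where
  "pos_part A T = \<Union>{C \<in> irr_components A T. pf_eigenvalue A C > 0}"

definition zero_part :: "('s \<Rightarrow> 's \<Rightarrow> real) \<Rightarrow> 's set \<Rightarrow> 's set" where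
  "zero_part A T = \<Union>{C \<in> irr_components A T. pf_eigenvalue A C = 0}"

definition neg_part :: "('s \<Rightarrow> 's \<Rightarrow> real) \<Rightarrow> 's set \<Rightarrow> 's set" where
  "neg_part A T = \<Union>{C \<in> irr_components A T. pf_eigenvalue A C < 0}"

definition perp :: "'s set \<Rightarrow> ('s \<Rightarrow> 's \<Rightarrow> real) \<Rightarrow> 's set \<Rightarrow> 's set" where
  "perp S A T = {s \<in> S. \<forall>t\<in>T. A s t = 0}"

end

theory Submission
  imports Defs "Jordan_Normal_Form.Determinant"
begin

lemma kernel_subspace:
  fixes f :: "'x::real_vector \<Rightarrow> real"
  assumes "linear f" shows "subspace {h. f h = 0}"
  using assms unfolding subspace_def by (auto simp: linear_add linear_scale linear_0)

lemma gordan: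
  fixes f :: "'i \<Rightarrow> 'x::real_vector \<Rightarrow> real"
  assumes "finite I" "\<forall>i\<in>I. linear (f i)"
  shows "subspace H \<Longrightarrow> (\<exists>x\<in>H. \<forall>i\<in>I. f i x < 0) \<or>
     (\<exists>y. (\<forall>i\<in>I. y i \<ge> 0) \<and> (\<exists>i\<in>I. y i \<noteq> 0) \<and> (\<forall>x\<in>H. (\<Sum>i\<in>I. y i * f i x) = 0))"
  using assms
proof (induction I arbitrary: H rule: finite_induct)
  case empty then show ?case using subspace_0 by blast
next
  case (insert j I)
  have linI: "\<forall>i\<in>I. linear (f i)" and linj: "linear (f j)" using insert.prems by auto
  have sH: "subspace H" by fact
  consider (dual) y where "\<forall>i\<in>I. y i \<ge> 0" "\<exists>i\<in>I. y i \<noteq> 0" "\<forall>x\<in>H. (\<Sum>i\<in>I. y i * f i x) = 0"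
     | (prim) x where "x\<in>H" "\<forall>i\<in>I. f i x < 0"
    using insert.IH[OF sH linI] insert.hyps by blast
  then show ?case
  proof cases
    case dual
    let ?y = "y(j:=0)"
    have e: "(\<Sum>i\<in>I. ?y i * f i h) = (\<Sum>i\<in>I. y i * f i h)" for h
      by (rule sum.cong) (use insert.hyps in auto)
    have "\<forall>x\<in>H. (\<Sum>i\<in>insert j I. ?y i * f i x) = 0"
      using dual(3) insert.hyps e by (simp add: sum.insert)
    then show ?thesis using dual insert.hyps by (intro disjI2 exI[of _ ?y]) auto
  next
    case prim
    show ?thesis
    proof (cases "f j x < 0")
      case True then show ?thesis using prim by auto
    next
      case fjx: False
      show ?thesis
      proof (cases "\<forall>h\<in>H. f j h = 0")
        case True
        let ?y = "\<lambda>i. if i = j then 1 else (0::real)"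
        have e: "(\<Sum>i\<in>I. ?y i * f i h) = 0" for h
          by (rule sum.neutral) (use insert.hyps in auto)
        have "\<forall>h\<in>H. (\<Sum>i\<in>insert j I. ?y i * f i h) = 0" using True insert.hyps e by (simp add: sum.insert)
        then show ?thesis by (intro disjI2 exI[of _ ?y]) auto
      next
        case False
        then obtain z where z: "z\<in>H" "f j z \<noteq> 0" by auto
        define z0 where "z0 = (- f j z) *\<^sub>R z"
        have z0H: "z0 \<in> H" using z sH by (simp add: z0_def subspace_scale subspace_neg)
        have "f j z0 = - (f j z * f j z)" using linj by (simp add: z0_def linear_scale linear_neg)
        moreover have "0 < f j z * f j z" using z(2) by (auto simp add: zero_less_mult_iff linorder_neq_iff)
        ultimately have fz0: "f j z0 < 0" by simp
        define H' where "H' = H \<inter> {h. f j h = 0}"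
        have sH': "subspace H'" unfolding H'_def by (rule subspace_inter[OF sH kernel_subspace[OF linj]])
        consider (dual2) y where "\<forall>i\<in>I. y i \<ge> 0" "\<exists>i\<in>I. y i \<noteq> 0" "\<forall>x\<in>H'. (\<Sum>i\<in>I. y i * f i x) = 0"
          | (prim2) u where "u\<in>H'" "\<forall>i\<in>I. f i u < 0"
          using insert.IH[OF sH' linI] insert.hyps by blast
        then show ?thesis
        proof cases
          case prim2
          define lam where "lam = 1 + (\<Sum>i\<in>I. \<bar>f i z0\<bar> / (- f i u))"
          have "\<forall>i\<in>I. f i (lam *\<^sub>R u + z0) < 0"
          proof
            fix i assume i: "i\<in>I"
            have pos: "- f i u > 0" using prim2 i by auto
            have "\<bar>f i z0\<bar> / (- f i u) \<le> (\<Sum>i\<in>I. \<bar>f i z0\<bar> / (- f i u))"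
              by (rule member_le_sum) (use i prim2 insert.hyps in \<open>auto simp: divide_nonneg_neg less_imp_le\<close>)
            then have "lam \<ge> \<bar>f i z0\<bar> / (- f i u) + 1" unfolding lam_def by simp
            then have A: "lam * (- f i u) \<ge> (\<bar>f i z0\<bar> / (- f i u) + 1) * (- f i u)"
              using pos by (simp add: mult_right_mono)
            have B: "(\<bar>f i z0\<bar> / (- f i u) + 1) * (- f i u) = \<bar>f i z0\<bar> + (- f i u)" using pos by (simp add: field_simps)
            from A B have "lam * (- f i u) > \<bar>f i z0\<bar>" using pos by linarith
            moreover have "f i (lam *\<^sub>R u + z0) = lam * f i u + f i z0"
              using linI i by (simp add: linear_add linear_scale)
            moreover have "f i z0 \<le> \<bar>f i z0\<bar>" by simp
            ultimately show "f i (lam *\<^sub>R u + z0) < 0" by (simp add: algebra_simps)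
          qed
          moreover have "f j (lam *\<^sub>R u + z0) < 0"
            using linj fz0 prim2(1) by (simp add: linear_add linear_scale H'_def)
          moreover have "lam *\<^sub>R u + z0 \<in> H"
            using prim2(1) z0H sH by (simp add: H'_def subspace_add subspace_scale)
          ultimately show ?thesis by auto
        next
          case dual2
          define \<phi> where "\<phi> = (\<lambda>h. \<Sum>i\<in>I. y i * f i h)"
          define c where "c = \<phi> z0 / f j z0"
          have phi: "\<phi> h = c * f j h" if h: "h\<in>H" for h
          proof -
            define h' where "h' = h - (f j h / f j z0) *\<^sub>R z0"
            have "h' \<in> H" using h z0H sH by (simp add: h'_def subspace_diff subspace_scale)
            moreover have "f j h' = 0" using linj fz0 by (simp add: h'_def linear_diff linear_scale)
            ultimately have "\<phi> h' = 0" using dual2(3) by (simp add: H'_def \<phi>_def)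
            moreover have "\<phi> h' = \<phi> h - (f j h / f j z0) * \<phi> z0"
              unfolding \<phi>_def h'_def using linI
              by (simp add: linear_diff linear_scale sum_subtractf sum_distrib_left algebra_simps)
            ultimately show ?thesis using fz0 by (simp add: c_def field_simps)
          qed
          show ?thesis
          proof (cases "c \<le> 0")
            case True
            let ?y = "y(j := -c)"
            have e: "(\<Sum>i\<in>I. ?y i * f i h) = \<phi> h" for h
              unfolding \<phi>_def by (rule sum.cong) (use insert.hyps in auto)
            have "\<forall>h\<in>H. (\<Sum>i\<in>insert j I. ?y i * f i h) = 0"
              using insert.hyps e phi by (simp add: sum.insert)
            then show ?thesis using dual2 True insert.hyps by (intro disjI2 exI[of _ ?y]) auto
          next
            case False
            have "\<phi> x \<ge> 0" using phi[OF prim(1)] False fjx by simp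
            moreover have "\<phi> x < 0"
            proof -
              have "(\<Sum>i\<in>I. y i * f i x) < (\<Sum>i\<in>I. 0)"
              proof (rule sum_strict_mono_ex1)
                show "finite I" by fact
                show "\<forall>i\<in>I. y i * f i x \<le> 0" using dual2(1) prim(2)
                  by (simp add: mult_nonneg_nonpos less_imp_le)
                show "\<exists>i\<in>I. y i * f i x < 0" using dual2(1,2) prim(2)
                  by (metis less_eq_real_def mult_pos_neg)
              qed
              then show ?thesis by (simp add: \<phi>_def)
            qed
            ultimately show ?thesis by simp
          qed
        qed
      qed
    qed
  qed
qed

lemma left_null_imp_right_null:
  fixes M :: "'s \<Rightarrow> 's \<Rightarrow> real"
  assumes fin: "finite C" and t0: "t0 \<in> C" "y t0 \<noteq> 0"
    and ly: "\<forall>t\<in>C. (\<Sum>s\<in>C. y s * M s t) = 0"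
  shows "\<exists>z. (\<exists>t\<in>C. z t \<noteq> 0) \<and> (\<forall>s\<in>C. (\<Sum>t\<in>C. M s t * z t) = 0)"
proof -
  define n where "n = card C"
  obtain g where g: "bij_betw g {0..<n} C" using ex_bij_betw_nat_finite[OF fin] n_def by blast
  have gC: "g i \<in> C" if "i < n" for i using g that by (auto simp: bij_betw_def)
  have reidx: "(\<Sum>i\<in>{0..<n}. h (g i)) = (\<Sum>s\<in>C. h s)" for h :: "'s \<Rightarrow> real"
    by (rule sum.reindex_bij_betw[OF g])
  define Mt where "Mt = mat n n (\<lambda>(i,j). M (g i) (g j))"
  have Mc: "Mt \<in> carrier_mat n n" by (simp add: Mt_def)
  have Mtc: "transpose_mat Mt \<in> carrier_mat n n" by (simp add: Mt_def)
  define yv where "yv = vec n (\<lambda>i. y (g i))"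
  have "transpose_mat Mt *\<^sub>v yv = 0\<^sub>v n"
  proof (rule eq_vecI)
    fix j assume j: "j < dim_vec (0\<^sub>v n :: real vec)"
    then have jn: "j < n" by simp
    have "(transpose_mat Mt *\<^sub>v yv) $ j = (\<Sum>i\<in>{0..<n}. M (g i) (g j) * y (g i))"
      using jn by (simp add: Mt_def yv_def mult_mat_vec_def scalar_prod_def)
    also have "\<dots> = (\<Sum>s\<in>C. y s * M s (g j))" using reidx[of "\<lambda>s. y s * M s (g j)"] by (simp add: mult.commute)
    also have "\<dots> = 0" using ly gC[OF jn] by auto
    finally show "(transpose_mat Mt *\<^sub>v yv) $ j = 0\<^sub>v n $ j" using jn by simp
  qed (simp add: Mt_def yv_def)
  moreover have "yv \<noteq> 0\<^sub>v n"
  proof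
    obtain i0 where i0: "i0 < n" "g i0 = t0" using g t0(1) by (auto simp: bij_betw_def)
    assume "yv = 0\<^sub>v n"
    then have "yv $ i0 = 0" using i0 by simp
    then show False using i0 t0 by (simp add: yv_def)
  qed
  moreover have "yv \<in> carrier_vec n" by (simp add: yv_def)
  ultimately have "det (transpose_mat Mt) = 0" using det_0_iff_vec_prod_zero[OF Mtc] by blast
  then have "det Mt = 0" using det_transpose[OF Mc] by simp
  then obtain zv where zv: "zv \<in> carrier_vec n" "zv \<noteq> 0\<^sub>v n" "Mt *\<^sub>v zv = 0\<^sub>v n"
    using det_0_iff_vec_prod_zero[OF Mc] by blast
  define z where "z = (\<lambda>t. zv $ (the_inv_into {0..<n} g t))"
  have zg: "z (g j) = zv $ j" if "j < n" for j
    using g that by (simp add: z_def the_inv_into_f_f bij_betw_def)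
  have "\<exists>t\<in>C. z t \<noteq> 0"
  proof (rule ccontr)
    assume "\<not> ?thesis"
    then have "zv = 0\<^sub>v n" using zv(1) zg gC by (intro eq_vecI) auto
    then show False using zv(2) by simp
  qed
  moreover have "\<forall>s\<in>C. (\<Sum>t\<in>C. M s t * z t) = 0"
  proof
    fix s assume s: "s \<in> C"
    obtain i where i: "i < n" "g i = s" using g s by (auto simp: bij_betw_def)
    have "(\<Sum>t\<in>C. M s t * z t) = (\<Sum>j\<in>{0..<n}. M s (g j) * z (g j))" using reidx[of "\<lambda>t. M s t * z t"] by simp
    also have "\<dots> = (\<Sum>j\<in>{0..<n}. M (g i) (g j) * zv $ j)" using zg i by (intro sum.cong) auto
    also have "\<dots> = (Mt *\<^sub>v zv) $ i" using i zv(1) by (simp add: Mt_def mult_mat_vec_def scalar_prod_def)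
    also have "\<dots> = 0" using zv(3) i by simp
    finally show "(\<Sum>t\<in>C. M s t * z t) = 0" .
  qed
  ultimately show ?thesis by blast
qed

lemma eig_bound:
  fixes A :: "'s \<Rightarrow> 's \<Rightarrow> real"
  assumes fin: "finite C" and diag: "\<forall>s\<in>C. A s s = 2"
    and off: "\<forall>s\<in>C. \<forall>t\<in>C. s \<noteq> t \<longrightarrow> A s t \<le> 0"
    and ypos: "\<forall>s\<in>C. y s > 0" and ly: "\<forall>t\<in>C. (\<Sum>s\<in>C. y s * A s t) = 0"
    and ev: "eigenvalue_on A C \<mu>"
  shows "cmod (2 - \<mu>) \<le> 2"
proof -
  obtain z where z1: "\<exists>t\<in>C. z t \<noteq> 0"
    and z2: "\<forall>s\<in>C. (\<Sum>t\<in>C. complex_of_real (A s t) * z t) = \<mu> * z s"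
    using ev unfolding eigenvalue_on_def by blast
  define b where "b = (\<lambda>s t. (if t = s then 2 else 0) - A s t)"
  have bnn: "b s t \<ge> 0" if "s \<in> C" "t \<in> C" for s t
    using diag off that by (auto simp: b_def)
  have row: "cmod (2 - \<mu>) * cmod (z s) \<le> (\<Sum>t\<in>C. b s t * cmod (z t))" if s: "s \<in> C" for s
  proof -
    have "(\<Sum>t\<in>C. complex_of_real (b s t) * z t)
        = (\<Sum>t\<in>C. (if t = s then 2 * z t else 0)) - (\<Sum>t\<in>C. complex_of_real (A s t) * z t)"
      unfolding sum_subtractf[symmetric] by (intro sum.cong) (auto simp: b_def algebra_simps)
    also have "\<dots> = (2 - \<mu>) * z s" using s fin z2 by (simp add: algebra_simps)
    finally have eq: "(2 - \<mu>) * z s = (\<Sum>t\<in>C. complex_of_real (b s t) * z t)" ..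
    have "cmod (2 - \<mu>) * cmod (z s) = cmod (\<Sum>t\<in>C. complex_of_real (b s t) * z t)"
      by (simp add: eq[symmetric] norm_mult)
    also have "\<dots> \<le> (\<Sum>t\<in>C. cmod (complex_of_real (b s t) * z t))" by (rule norm_sum)
    also have "\<dots> = (\<Sum>t\<in>C. b s t * cmod (z t))"
      using bnn s by (intro sum.cong) (auto simp: norm_mult)
    finally show ?thesis .
  qed
  define W where "W = (\<Sum>t\<in>C. y t * cmod (z t))"
  have Wpos: "W > 0"
  proof -
    obtain t1 where t1: "t1 \<in> C" "z t1 \<noteq> 0" using z1 by blast
    have "(\<Sum>t\<in>C. 0) < W" unfolding W_def
      using fin ypos t1 by (intro sum_strict_mono_ex1) (auto intro!: bexI[of _ t1])
    then show ?thesis by simp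
  qed
  have "cmod (2 - \<mu>) * W = (\<Sum>s\<in>C. y s * (cmod (2 - \<mu>) * cmod (z s)))"
    unfolding W_def by (simp add: sum_distrib_left algebra_simps)
  also have "\<dots> \<le> (\<Sum>s\<in>C. y s * (\<Sum>t\<in>C. b s t * cmod (z t)))"
    using row ypos by (intro sum_mono mult_left_mono) (auto simp: less_imp_le)
  also have "\<dots> = (\<Sum>t\<in>C. (\<Sum>s\<in>C. y s * b s t) * cmod (z t))"
  proof -
    have "(\<Sum>s\<in>C. y s * (\<Sum>t\<in>C. b s t * cmod (z t))) = (\<Sum>s\<in>C. \<Sum>t\<in>C. y s * b s t * cmod (z t))"
      by (simp add: sum_distrib_left mult.assoc)
    also have "\<dots> = (\<Sum>t\<in>C. \<Sum>s\<in>C. y s * b s t * cmod (z t))" by (rule sum.swap)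
    also have "\<dots> = (\<Sum>t\<in>C. (\<Sum>s\<in>C. y s * b s t) * cmod (z t))" by (simp add: sum_distrib_right)
    finally show ?thesis .
  qed
  also have "\<dots> = (\<Sum>t\<in>C. (2 * y t) * cmod (z t))"
  proof (intro sum.cong refl)
    fix t assume t: "t \<in> C"
    have "(\<Sum>s\<in>C. y s * b s t) = (\<Sum>s\<in>C. (if t = s then 2 * y s else 0)) - (\<Sum>s\<in>C. y s * A s t)"
      unfolding sum_subtractf[symmetric] by (intro sum.cong) (auto simp: b_def algebra_simps)
    also have "\<dots> = 2 * y t" using t fin ly by simp
    finally show "(\<Sum>s\<in>C. y s * b s t) * cmod (z t) = (2 * y t) * cmod (z t)" by simp
  qed
  also have "\<dots> = 2 * W" unfolding W_def by (simp add: sum_distrib_left algebra_simps)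
  finally have "cmod (2 - \<mu>) * W \<le> 2 * W" .
  then show ?thesis using Wpos by simp
qed

lemma pf_zero:
  fixes A :: "'s \<Rightarrow> 's \<Rightarrow> real"
  assumes fin: "finite C" and ne: "C \<noteq> {}" and diag: "\<forall>s\<in>C. A s s = 2"
    and off: "\<forall>s\<in>C. \<forall>t\<in>C. s \<noteq> t \<longrightarrow> A s t \<le> 0"
    and ypos: "\<forall>s\<in>C. y s > 0" and ly: "\<forall>t\<in>C. (\<Sum>s\<in>C. y s * A s t) = 0"
  shows "pf_eigenvalue A C = 0"
proof -
  obtain t0 where t0: "t0 \<in> C" using ne by blast
  have "y t0 \<noteq> 0" using ypos t0 by auto
  then obtain z where z: "\<exists>t\<in>C. z t \<noteq> 0" "\<forall>s\<in>C. (\<Sum>t\<in>C. A s t * z t) = 0"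
    using left_null_imp_right_null[OF fin t0 _ ly] by blast
  have "eigenvalue_on A C 0"
    unfolding eigenvalue_on_def
  proof (intro exI[of _ "\<lambda>t. complex_of_real (z t)"] conjI)
    show "\<exists>t\<in>C. complex_of_real (z t) \<noteq> 0" using z(1) by auto
    show "\<forall>s\<in>C. (\<Sum>t\<in>C. complex_of_real (A s t) * complex_of_real (z t)) = 0 * complex_of_real (z s)"
    proof
      fix s assume s: "s \<in> C"
      have "(\<Sum>t\<in>C. complex_of_real (A s t) * complex_of_real (z t)) = complex_of_real (\<Sum>t\<in>C. A s t * z t)"
        by simp
      also have "\<dots> = 0" using z(2) s by simp
      finally show "(\<Sum>t\<in>C. complex_of_real (A s t) * complex_of_real (z t)) = 0 * complex_of_real (z s)" by simp
    qed
  qed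
  then have mem: "2 \<in> {cmod (2 - \<mu>) | \<mu>. eigenvalue_on A C \<mu>}" by force
  have "Sup {cmod (2 - \<mu>) | \<mu>. eigenvalue_on A C \<mu>} = 2"
    by (rule cSup_eq_maximum[OF mem]) (use eig_bound[OF fin diag off ypos ly] in blast)
  then show ?thesis unfolding pf_eigenvalue_def by simp
qed

lemma rtrancl_sym:
  assumes symE: "\<forall>a b. (a,b) \<in> E \<longrightarrow> (b,a) \<in> E" and ab: "(a,b) \<in> E\<^sup>*"
  shows "(b,a) \<in> E\<^sup>*"
  using ab
proof (induction rule: rtrancl_induct)
  case base then show ?case by simp
next
  case (step b c)
  then show ?case using symE by (meson converse_rtrancl_into_rtrancl)
qed

lemma pos_propagate:
  fixes A :: "'s \<Rightarrow> 's \<Rightarrow> real" and E :: "('s \<times> 's) set"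
  assumes fin: "finite C" and off: "\<forall>s\<in>C. \<forall>t\<in>C. s \<noteq> t \<longrightarrow> A s t \<le> 0"
    and ynn: "\<forall>s\<in>C. y s \<ge> 0" and ly: "\<forall>t\<in>C. (\<Sum>s\<in>C. y s * A s t) = 0"
    and Cdef: "C = {t. (sa,t) \<in> E\<^sup>*}" and symE: "\<forall>a b. (a,b) \<in> E \<longrightarrow> (b,a) \<in> E"
    and Enz: "\<forall>a b. (a,b) \<in> E \<longrightarrow> A b a \<noteq> 0"
    and ta: "ta \<in> C" "y ta \<noteq> 0"
  shows "\<forall>t\<in>C. y t > 0"
proof -
  have stp: "y b = 0" if a: "a \<in> C" "y a = 0" "(a,b) \<in> E" for a b
  proof (cases "b = a")
    case True then show ?thesis using a by simp
  next
    case False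
    have bC: "b \<in> C" using a Cdef by (auto intro: rtrancl_into_rtrancl)
    have "(\<Sum>s\<in>C. y s * A s a) = y a * A a a + (\<Sum>s\<in>C-{a}. y s * A s a)"
      using fin a(1) by (simp add: sum.remove)
    then have sum0: "(\<Sum>s\<in>C-{a}. y s * A s a) = 0" using ly a by simp
    have nn: "\<forall>s\<in>C-{a}. 0 \<le> - (y s * A s a)" using ynn off a(1)
      by (auto simp: mult_nonneg_nonpos)
    have "(\<Sum>s\<in>C-{a}. - (y s * A s a)) = 0" using sum0 by (simp add: sum_negf)
    then have "\<forall>s\<in>C-{a}. - (y s * A s a) = 0"
      using sum_nonneg_eq_0_iff[of "C-{a}" "\<lambda>s. - (y s * A s a)"] fin nn by auto
    then have "y b * A b a = 0" using bC False by auto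
    then show ?thesis using Enz a(3) by simp
  qed
  have reach: "y b = 0" if ab: "(a,b) \<in> E\<^sup>*" and aC: "a \<in> C" and ya: "y a = 0" for a b
    using ab
  proof (induction rule: rtrancl_induct)
    case base then show ?case using ya by simp
  next
    case (step b c)
    have "b \<in> C" using aC step(1) Cdef by (auto intro: rtrancl_trans)
    then show ?case using \<open>y b = 0\<close> step(2) by (rule stp)
  qed
  show ?thesis
  proof
    fix t assume t: "t \<in> C"
    show "y t > 0"
    proof (rule ccontr)
      assume "\<not> y t > 0"
      then have yt: "y t = 0" using ynn t by force
      have "(sa,t) \<in> E\<^sup>*" "(sa,ta) \<in> E\<^sup>*" using t ta Cdef by auto
      then have "(t,ta) \<in> E\<^sup>*" using rtrancl_sym[OF symE] by (meson rtrancl_trans)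
      then have "y ta = 0" using reach t yt by blast
      then show False using ta by simp
    qed
  qed
qed

lemma face_lemma:
  fixes \<alpha> :: "'s \<Rightarrow> 'v::euclidean_space \<Rightarrow> real" and v :: "'s \<Rightarrow> 'v"
  assumes lin: "\<forall>s\<in>S. linear (\<alpha> s)" and finS: "finite S"
    and face: "defines_face S \<alpha> (T1 \<union> T2)" and T1S: "T1 \<subseteq> S" and T2S: "T2 \<subseteq> S"
    and UT2: "U \<subseteq> T2"
    and van: "\<forall>s\<in>T1 \<union> (T2 - U). \<forall>t\<in>U. \<alpha> s (v t) = 0"
    and nodual: "\<not> (\<exists>y. (\<forall>s\<in>U. y s \<ge> 0) \<and> (\<exists>s\<in>U. y s \<noteq> 0) \<and> (\<forall>t\<in>U. (\<Sum>s\<in>U. y s * \<alpha> s (v t)) = 0))"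
  shows "defines_face S \<alpha> (T1 \<union> (T2 - U))"
proof -
  have finU: "finite U" using finS UT2 T2S finite_subset by blast
  have linU: "\<forall>s\<in>U. linear (\<alpha> s)" using lin UT2 T2S by blast
  have "\<exists>w\<in>span (v ` U). \<forall>s\<in>U. \<alpha> s w < 0"
  proof -
    have "\<not> (\<exists>y. (\<forall>i\<in>U. y i \<ge> 0) \<and> (\<exists>i\<in>U. y i \<noteq> 0) \<and> (\<forall>x\<in>span (v ` U). (\<Sum>i\<in>U. y i * \<alpha> i x) = 0))"
    proof
      assume "\<exists>y. (\<forall>i\<in>U. y i \<ge> 0) \<and> (\<exists>i\<in>U. y i \<noteq> 0) \<and> (\<forall>x\<in>span (v ` U). (\<Sum>i\<in>U. y i * \<alpha> i x) = 0)"
      then obtain y where y: "\<forall>i\<in>U. y i \<ge> 0" "\<exists>i\<in>U. y i \<noteq> 0" "\<forall>x\<in>span (v ` U). (\<Sum>i\<in>U. y i * \<alpha> i x) = 0"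
        by blast
      have "\<forall>t\<in>U. (\<Sum>s\<in>U. y s * \<alpha> s (v t)) = 0" using y(3) by (auto intro: span_base)
      then show False using nodual y(1,2) by blast
    qed
    then show ?thesis using gordan[OF finU linU subspace_span[of "v ` U"]] by blast
  qed
  then obtain w where w: "w \<in> span (v ` U)" "\<forall>s\<in>U. \<alpha> s w < 0" by blast
  have w0: "\<alpha> s w = 0" if s: "s \<in> T1 \<union> (T2 - U)" for s
  proof -
    have ls: "linear (\<alpha> s)" using lin s T1S T2S by blast
    have "subspace (Collect (\<lambda>h. \<alpha> s h = 0))" using kernel_subspace[OF ls] by simp
    moreover have "\<And>h. h \<in> v ` U \<Longrightarrow> \<alpha> s h = 0" using van s by blast
    ultimately show ?thesis using span_induct[OF w(1)] by blast
  qed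
  obtain x where x: "\<forall>s\<in>T1 \<union> T2. \<alpha> s x = 0" "\<forall>s\<in>S - (T1 \<union> T2). \<alpha> s x < 0"
    using face unfolding defines_face_def by blast
  define R where "R = S - (T1 \<union> T2)"
  define lam where "lam = 1 + (\<Sum>s\<in>R. \<bar>\<alpha> s w\<bar> / (- \<alpha> s x))"
  define y where "y = lam *\<^sub>R x + w"
  have ay: "\<alpha> s y = lam * \<alpha> s x + \<alpha> s w" if "s \<in> S" for s
    using lin that by (simp add: y_def linear_add linear_scale)
  have "\<alpha> s y < 0" if s: "s \<in> R" for s
  proof -
    have pos: "- \<alpha> s x > 0" using x(2) s by (auto simp: R_def)
    have "\<bar>\<alpha> s w\<bar> / (- \<alpha> s x) \<le> (\<Sum>s\<in>R. \<bar>\<alpha> s w\<bar> / (- \<alpha> s x))"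
      by (rule member_le_sum) (use s x(2) finS in \<open>auto simp: R_def divide_nonneg_neg less_imp_le\<close>)
    then have "lam \<ge> \<bar>\<alpha> s w\<bar> / (- \<alpha> s x) + 1" unfolding lam_def by simp
    then have A: "lam * (- \<alpha> s x) \<ge> (\<bar>\<alpha> s w\<bar> / (- \<alpha> s x) + 1) * (- \<alpha> s x)"
      using pos by (simp add: mult_right_mono)
    have B: "(\<bar>\<alpha> s w\<bar> / (- \<alpha> s x) + 1) * (- \<alpha> s x) = \<bar>\<alpha> s w\<bar> + (- \<alpha> s x)"
      using pos by (simp add: field_simps)
    from A B have "lam * (- \<alpha> s x) > \<bar>\<alpha> s w\<bar>" using pos by linarith
    moreover have "\<alpha> s w \<le> \<bar>\<alpha> s w\<bar>" by simp
    moreover have "\<alpha> s y = lam * \<alpha> s x + \<alpha> s w" using s ay by (simp add: R_def)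
    ultimately show ?thesis by (simp add: algebra_simps)
  qed
  moreover have "\<alpha> s y = 0" if s: "s \<in> T1 \<union> (T2 - U)" for s
    using ay[of s] s x(1) w0[OF s] T1S T2S by auto
  moreover have "\<alpha> s y < 0" if s: "s \<in> U" for s
  proof -
    have sS: "s \<in> S" using s UT2 T2S by auto
    have "\<alpha> s x = 0" using x(1) s UT2 by auto
    then show ?thesis using ay[OF sS] w(2) s by simp
  qed
  moreover have "S - (T1 \<union> (T2 - U)) \<subseteq> R \<union> U" using UT2 by (auto simp: R_def)
  ultimately show ?thesis unfolding defines_face_def using T1S T2S by blast
qed

lemma edges_sym: "\<forall>a b. (a,b) \<in> cartan_edges A T \<longrightarrow> (b,a) \<in> cartan_edges A T"
  by (auto simp: cartan_edges_def)

lemma reach_in: "(a,b) \<in> (cartan_edges A T)\<^sup>* \<Longrightarrow> a \<in> T \<Longrightarrow> b \<in> T"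
  by (induction rule: rtrancl_induct) (auto simp: cartan_edges_def)

lemma comp_eq:
  assumes "(s,t) \<in> (cartan_edges A T)\<^sup>*"
  shows "{u. (t,u) \<in> (cartan_edges A T)\<^sup>*} = {u. (s,u) \<in> (cartan_edges A T)\<^sup>*}"
proof -
  have "(t,s) \<in> (cartan_edges A T)\<^sup>*" using rtrancl_sym[OF edges_sym assms] .
  then show ?thesis using assms by (blast intro: rtrancl_trans)
qed

lemma part_char:
  "\<Union>{C \<in> irr_components A T. P (pf_eigenvalue A C)} =
   {x\<in>T. P (pf_eigenvalue A {t. (x,t) \<in> (cartan_edges A T)\<^sup>*})}"
proof
  show "\<Union>{C \<in> irr_components A T. P (pf_eigenvalue A C)} \<subseteq> {x\<in>T. P (pf_eigenvalue A {t. (x,t) \<in> (cartan_edges A T)\<^sup>*})}"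
  proof
    fix x assume "x \<in> \<Union>{C \<in> irr_components A T. P (pf_eigenvalue A C)}"
    then obtain s where s: "s \<in> T" "(s,x) \<in> (cartan_edges A T)\<^sup>*"
      "P (pf_eigenvalue A {t. (s,t) \<in> (cartan_edges A T)\<^sup>*})"
      unfolding irr_components_def by auto
    then show "x \<in> {x\<in>T. P (pf_eigenvalue A {t. (x,t) \<in> (cartan_edges A T)\<^sup>*})}"
      using comp_eq[OF s(2)] reach_in[OF s(2) s(1)] by simp
  qed
next
  show "{x\<in>T. P (pf_eigenvalue A {t. (x,t) \<in> (cartan_edges A T)\<^sup>*})} \<subseteq> \<Union>{C \<in> irr_components A T. P (pf_eigenvalue A C)}"
    unfolding irr_components_def by blast
qed

lemma key:
  fixes S :: "'s set" and \<alpha> :: "'s \<Rightarrow> 'v::euclidean_space \<Rightarrow> real" and v :: "'s \<Rightarrow> 'v"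
    and T1 T2 :: "'s set"
  assumes cox: "coxeter_polytope S \<alpha> v"
    and T1S: "T1 \<subseteq> S" and T2S: "T2 \<subseteq> S"
    and face: "defines_face S \<alpha> (T1 \<union> T2)"
    and perp: "T1 \<subseteq> perp S (cartan_of \<alpha> v) T2"
    and Pnz: "\<And>r. P r \<Longrightarrow> r \<noteq> 0"
  shows "defines_face S \<alpha> (T1 \<union> (T2 - {x\<in>T2. P (pf_eigenvalue (cartan_of \<alpha> v) {t. (x,t) \<in> (cartan_edges (cartan_of \<alpha> v) T2)\<^sup>*})}))"
proof -
  define A where "A = cartan_of \<alpha> v"
  define E where "E = cartan_edges A T2"
  define comp where "comp = (\<lambda>x. {t. (x,t) \<in> E\<^sup>*})"
  define U where "U = {x\<in>T2. P (pf_eigenvalue A (comp x))}"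
  have finS: "finite S" and lin: "\<forall>s\<in>S. linear (\<alpha> s)" and cm: "cartan_matrix S A"
    using cox unfolding coxeter_polytope_def A_def by auto
  have diag: "\<forall>s\<in>S. A s s = 2" and off: "\<forall>s\<in>S. \<forall>t\<in>S. s \<noteq> t \<longrightarrow> A s t \<le> 0"
    and zsym: "\<forall>s\<in>S. \<forall>t\<in>S. A s t = 0 \<longleftrightarrow> A t s = 0"
    using cm unfolding cartan_matrix_def by auto
  have Aeq: "A s t = \<alpha> s (v t)" for s t by (simp add: A_def cartan_of_def)
  have symE: "\<forall>a b. (a,b) \<in> E \<longrightarrow> (b,a) \<in> E" unfolding E_def by (rule edges_sym)
  have UT2: "U \<subseteq> T2" by (auto simp: U_def)
  have compeq: "(s,t) \<in> E\<^sup>* \<Longrightarrow> comp t = comp s" for s t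
    unfolding comp_def E_def by (rule comp_eq)
  have van: "\<forall>s\<in>T1 \<union> (T2 - U). \<forall>t\<in>U. \<alpha> s (v t) = 0"
  proof (intro ballI)
    fix s t assume s: "s \<in> T1 \<union> (T2 - U)" and t: "t \<in> U"
    show "\<alpha> s (v t) = 0"
    proof (cases "s \<in> T1")
      case True
      then show ?thesis using perp t UT2 by (auto simp: perp_def A_def cartan_of_def)
    next
      case False
      then have s2: "s \<in> T2" "s \<notin> U" using s by auto
      show ?thesis
      proof (rule ccontr)
        assume "\<alpha> s (v t) \<noteq> 0"
        then have "(t,s) \<in> E" using s2 t UT2 by (auto simp: E_def cartan_edges_def Aeq)
        then have "comp s = comp t" using compeq by blast
        then show False using s2 t by (simp add: U_def)
      qed
    qed
  qed
  have nodual: "\<not> (\<exists>y. (\<forall>s\<in>U. y s \<ge> 0) \<and> (\<exists>s\<in>U. y s \<noteq> 0) \<and> (\<forall>t\<in>U. (\<Sum>s\<in>U. y s * \<alpha> s (v t)) = 0))"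
  proof
    assume "\<exists>y. (\<forall>s\<in>U. y s \<ge> 0) \<and> (\<exists>s\<in>U. y s \<noteq> 0) \<and> (\<forall>t\<in>U. (\<Sum>s\<in>U. y s * \<alpha> s (v t)) = 0)"
    then obtain y s1 where y: "\<forall>s\<in>U. y s \<ge> 0" "s1 \<in> U" "y s1 \<noteq> 0" "\<forall>t\<in>U. (\<Sum>s\<in>U. y s * A s t) = 0"
      by (auto simp: Aeq)
    define C where "C = comp s1"
    have s1T: "s1 \<in> T2" using y(2) UT2 by auto
    have CT2: "C \<subseteq> T2" using reach_in[of s1 _ A T2] s1T by (auto simp: C_def comp_def E_def)
    have CS: "C \<subseteq> S" using CT2 T2S by auto
    have finC: "finite C" using CS finS finite_subset by blast
    have s1C: "s1 \<in> C" by (simp add: C_def comp_def)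
    have PC: "P (pf_eigenvalue A C)" using y(2) by (simp add: U_def C_def)
    have CU: "C \<subseteq> U"
    proof
      fix c assume c: "c \<in> C"
      then have "comp c = C" using compeq by (simp add: C_def comp_def)
      then show "c \<in> U" using c CT2 PC by (auto simp: U_def)
    qed
    have finU: "finite U" using UT2 T2S finS finite_subset by blast
    have lyC: "\<forall>t\<in>C. (\<Sum>s\<in>C. y s * A s t) = 0"
    proof
      fix t assume t: "t \<in> C"
      have "(\<Sum>s\<in>U. y s * A s t) = (\<Sum>s\<in>C. y s * A s t)"
      proof (rule sum.mono_neutral_right[OF finU CU], rule ballI)
        fix s assume s: "s \<in> U - C"
        have "A s t = 0"
        proof (rule ccontr)
          assume "A s t \<noteq> 0"
          then have "(t,s) \<in> E" using s t CT2 UT2 by (auto simp: E_def cartan_edges_def)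
          moreover have "(s1,t) \<in> E\<^sup>*" using t by (simp add: C_def comp_def)
          ultimately have "s \<in> C" by (simp add: C_def comp_def rtrancl_into_rtrancl)
          then show False using s by simp
        qed
        then show "y s * A s t = 0" by simp
      qed
      then show "(\<Sum>s\<in>C. y s * A s t) = 0" using y(4) t CU by auto
    qed
    have Enz: "\<forall>a b. (a,b) \<in> E \<longrightarrow> A b a \<noteq> 0"
      using zsym T2S by (auto simp: E_def cartan_edges_def)
    have ypos: "\<forall>t\<in>C. y t > 0"
      by (rule pos_propagate[where E=E and sa=s1 and ta=s1])
         (use finC off CS y(1) CU lyC symE Enz s1C y(3) in \<open>auto simp: C_def comp_def\<close>)
    have "pf_eigenvalue A C = 0"
      by (rule pf_zero[OF finC]) (use s1C diag off CS ypos lyC in auto)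
    then show False using PC Pnz by blast
  qed
  have "defines_face S \<alpha> (T1 \<union> (T2 - U))"
    by (rule face_lemma[OF lin finS face T1S T2S UT2 van nodual])
  then show ?thesis by (simp add: U_def comp_def E_def A_def)
qed

theorem lemma5p3:
  fixes S :: "'s set" and \<alpha> :: "'s \<Rightarrow> 'v::euclidean_space \<Rightarrow> real" and v :: "'s \<Rightarrow> 'v"
    and T1 T2 :: "'s set"
  assumes "coxeter_polytope S \<alpha> v"
    and "T1 \<subseteq> S" and "T2 \<subseteq> S" and "T1 \<inter> T2 = {}"
    and "defines_face S \<alpha> (T1 \<union> T2)"
    and "T1 \<subseteq> perp S (cartan_of \<alpha> v) T2"
  shows "defines_face S \<alpha> (T1 \<union> zero_part (cartan_of \<alpha> v) T2) \<and>
         defines_face S \<alpha> (T1 \<union> zero_part (cartan_of \<alpha> v) T2 \<union> pos_part (cartan_of \<alpha> v) T2) \<and>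
         defines_face S \<alpha> (T1 \<union> zero_part (cartan_of \<alpha> v) T2 \<union> neg_part (cartan_of \<alpha> v) T2)"
proof -
  define pf where "pf = (\<lambda>x. pf_eigenvalue (cartan_of \<alpha> v) {t. (x,t) \<in> (cartan_edges (cartan_of \<alpha> v) T2)\<^sup>*})"
  have z: "zero_part (cartan_of \<alpha> v) T2 = {x\<in>T2. pf x = 0}"
    unfolding zero_part_def pf_def by (rule part_char[where P="\<lambda>r. r = 0"])
  have p: "pos_part (cartan_of \<alpha> v) T2 = {x\<in>T2. pf x > 0}"
    unfolding pos_part_def pf_def by (rule part_char[where P="\<lambda>r. r > 0"])
  have n: "neg_part (cartan_of \<alpha> v) T2 = {x\<in>T2. pf x < 0}"
    unfolding neg_part_def pf_def by (rule part_char[where P="\<lambda>r. r < 0"])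
  have k1: "defines_face S \<alpha> (T1 \<union> (T2 - {x\<in>T2. pf x \<noteq> 0}))"
    using key[OF assms(1,2,3,5,6), where P="\<lambda>r. r \<noteq> 0"] by (simp add: pf_def)
  have k2: "defines_face S \<alpha> (T1 \<union> (T2 - {x\<in>T2. pf x < 0}))"
    using key[OF assms(1,2,3,5,6), where P="\<lambda>r. r < 0"] by (simp add: pf_def)
  have k3: "defines_face S \<alpha> (T1 \<union> (T2 - {x\<in>T2. pf x > 0}))"
    using key[OF assms(1,2,3,5,6), where P="\<lambda>r. r > 0"] by (simp add: pf_def)
  have e1: "T1 \<union> (T2 - {x\<in>T2. pf x \<noteq> 0}) = T1 \<union> zero_part (cartan_of \<alpha> v) T2" by (auto simp: z)
  have e2: "T1 \<union> (T2 - {x\<in>T2. pf x < 0}) = T1 \<union> zero_part (cartan_of \<alpha> v) T2 \<union> pos_part (cartan_of \<alpha> v) T2"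
    by (auto simp: z p)
  have e3: "T1 \<union> (T2 - {x\<in>T2. pf x > 0}) = T1 \<union> zero_part (cartan_of \<alpha> v) T2 \<union> neg_part (cartan_of \<alpha> v) T2"
    by (auto simp: z n)
  show ?thesis using k1 k2 k3 e1 e2 e3 by simp
qed

end
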